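(* The group $G=\langle\sigma_1,\sigma_2,\sigma_3\rangle$ of birational transformations of $\overline{\mathcal{S}}(\theta)$ is a universal Coxeter group of rank three on the generators $\sigma_1,\sigma_2,\sigma_3$; that is, there are no relations other than those generated by $\sigma_1^2=\sigma_2^2=\sigma_3^2=1$. In particular, every element of $G$ other than the identity has a unique expression $\sigma_{i_1}\sigma_{i_2}\cdots\sigma_{i_n}$ with $n\ge1$ and $i_\nu\ne i_{\nu+1}$ for all $\nu$.
   Context: Let $\kappa\in\mathcal{K}=\{\kappa\in\mathbb{C}^5:2\kappa_0+\kappa_1+\dots+\kappa_4=1\}$ lie outside $\mathrm{Wall}$ (union of the hyperplanes $\kappa_i=m$, $i=1,\dots,4$, and $\kappa_1\pm\kappa_2\pm\kappa_3\pm\kappa_4=2m+1$, $m\in\mathbb{Z}$), and $\theta=\mathrm{rh}(\kappa)$: $a_i=2\cos\pi\kappa_i$ ($i=1,2,3$), $a_4=-2\cos\pi\kappa_4$, $\theta_i=a_ia_4+a_ja_k$ ($\{i,j,k\}=\{1,2,3\}$), $\theta_4=a_1a_2a_3a_4+\sum_{l=1}^4a_l^2-4$; $\overline{\mathcal{S}}(\theta)\subset\mathbb{P}^3$ is the (smooth) cubic surface $X_1X_2X_3+X_0(X_1^2+X_2^2+X_3^2)-X_0^2(\theta_1X_1+\theta_2X_2+\theta_3X_3)+\theta_4X_0^3=0$. For $\{i,j,k\}=\{1,2,3\}$, $\sigma_i$ is the birational involution of $\overline{\mathcal{S}}(\theta)$ given by $X'_0=X_0^2$, $X'_i=\theta_iX_0^2-X_0X_i-X_jX_k$,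 $X'_j=X_0X_j$, $X'_k=X_0X_k$ (on the affine part $x=(X_1/X_0,X_2/X_0,X_3/X_0)$: $(x_i,x_j,x_k)\mapsto(\theta_i-x_i-x_jx_k,x_j,x_k)$). *)

theory Defs
  imports Complex_Main
begin

text \<open>Parameters kappa = (k 0, ..., k 4); values of k at other indices are irrelevant.\<close>

definition in_K :: "(nat \<Rightarrow> complex) \<Rightarrow> bool" where
  "in_K k \<longleftrightarrow> 2 * k 0 + k 1 + k 2 + k 3 + k 4 = 1"

definition in_Wall :: "(nat \<Rightarrow> complex) \<Rightarrow> bool" where
  "in_Wall k \<longleftrightarrow>
     (\<exists>i\<in>{1..4::nat}. \<exists>m::int. k i = of_int m) \<or>
     (\<exists>e2\<in>{1, -1::complex}. \<exists>e3\<in>{1, -1::complex}. \<exists>e4\<in>{1, -1::complex}. \<exists>m::int.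
        k 1 + e2 * k 2 + e3 * k 3 + e4 * k 4 = of_int (2 * m + 1))"

definition rh_a :: "(nat \<Rightarrow> complex) \<Rightarrow> nat \<Rightarrow> complex" where
  "rh_a k i = (if i = 4 then - 2 * cos (of_real pi * k 4) else 2 * cos (of_real pi * k i))"

text \<open>theta = rh(kappa), indexed 1..4.\<close>
definition rh :: "(nat \<Rightarrow> complex) \<Rightarrow> nat \<Rightarrow> complex" where
  "rh k i = (let a = rh_a k in
     if i = 1 then a 1 * a 4 + a 2 * a 3
     else if i = 2 then a 2 * a 4 + a 1 * a 3
     else if i = 3 then a 3 * a 4 + a 1 * a 2
     else a 1 * a 2 * a 3 * a 4 + a 1 ^ 2 + a 2 ^ 2 + a 3 ^ 2 + a 4 ^ 2 - 4)"

text \<open>Affine part (X0 = 1) of the cubic surface S-bar(theta), coordinates (x1,x2,x3).\<close>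
definition affine_surface :: "(nat \<Rightarrow> complex) \<Rightarrow> (complex \<times> complex \<times> complex) set" where
  "affine_surface th = {(x1, x2, x3).
     x1 * x2 * x3 + (x1 ^ 2 + x2 ^ 2 + x3 ^ 2) - (th 1 * x1 + th 2 * x2 + th 3 * x3) + th 4 = 0}"

definition sigma :: "(nat \<Rightarrow> complex) \<Rightarrow> nat \<Rightarrow> complex \<times> complex \<times> complex \<Rightarrow> complex \<times> complex \<times> complex" where
  "sigma th i = (\<lambda>(x1, x2, x3).
     if i = 1 then (th 1 - x1 - x2 * x3, x2, x3)
     else if i = 2 then (x1, th 2 - x2 - x1 * x3, x3)
     else (x1, x2, th 3 - x3 - x1 * x2))"

definition word_map :: "(nat \<Rightarrow> complex) \<Rightarrow> nat list \<Rightarrow> complex \<times> complex \<times> complex \<Rightarrow> complex \<times> complex \<times> complex" where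
  "word_map th ws = foldr (\<lambda>i f. sigma th i \<circ> f) ws id"

definition reduced_word :: "nat list \<Rightarrow> bool" where
  "reduced_word ws \<longleftrightarrow> set ws \<subseteq> {1, 2, 3} \<and> (\<forall>n. Suc n < length ws \<longrightarrow> ws ! n \<noteq> ws ! Suc n)"

end

theory Submission
  imports Defs
begin

definition UU :: "nat \<Rightarrow> complex \<times> complex \<times> complex \<Rightarrow> bool" where
  "UU i = (\<lambda>(a,b,c). if i = 1 then norm b < norm a \<and> norm c < norm a
     else if i = 2 then norm a < norm b \<and> norm c < norm b
     else norm a < norm c \<and> norm b < norm c)"

definition big :: "real \<Rightarrow> complex \<times> complex \<times> complex \<Rightarrow> bool" where
  "big M = (\<lambda>(a,b,c). M \<le> norm a \<and> M \<le> norm b \<and> M \<le> norm c)"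

lemma real_step:
  fixes A B C T M :: real
  assumes "B \<ge> M" "C \<ge> M" "A \<le> max B C" "M \<ge> 3 + T" "T \<ge> 0"
  shows "B * C - A - T > max B C"
proof (cases "B \<ge> C")
  case True
  have "B * C \<ge> B * M" using assms by (intro mult_left_mono) auto
  moreover have "B * M \<ge> 3 * B + B * T" using mult_left_mono[of "3+T" M B] assms by (simp add: distrib_left)
  moreover have "B * T \<ge> M * T" using assms by (intro mult_right_mono) auto
  moreover have "M * T \<ge> T" using mult_right_mono[of 1 M T] assms by simp
  ultimately show ?thesis using assms True by linarith
next
  case False
  have "B * C \<ge> M * C" using assms by (intro mult_right_mono) auto
  moreover have "C * M \<ge> 3 * C + C * T" using mult_left_mono[of "3+T" M C] assms by (simp add: distrib_left)
  moreover have "C * M = M * C" by simp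
  moreover have "C * T \<ge> M * T" using assms by (intro mult_right_mono) auto
  moreover have "M * T \<ge> T" using mult_right_mono[of 1 M T] assms by simp
  ultimately show ?thesis using assms False by linarith
qed

lemma cplx_step:
  fixes a b c t :: complex and M :: real
  assumes "norm b \<ge> M" "norm c \<ge> M" "norm a \<le> max (norm b) (norm c)" "M \<ge> 3 + norm t"
  shows "norm (t - a - b * c) > max (norm b) (norm c)"
proof -
  have "norm (b*c) \<le> norm (t - a - b*c) + norm a + norm t"
    using norm_triangle_ineq4[of "t - a - b*c" "t - a"] norm_triangle_ineq4[of t a]
    by (simp add: algebra_simps)
  moreover have "norm b * norm c - norm a - norm t > max (norm b) (norm c)"
    using real_step[OF assms(1,2,3,4)] by simp
  ultimately show ?thesis by (simp add: norm_mult)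
qed

lemma step:
  assumes "i \<in> {1,2,3}" "big M x" "\<not> UU i x" "\<And>j. j \<in> {1,2,3::nat} \<Longrightarrow> M \<ge> 3 + norm (th j)"
  shows "UU i (sigma th i x) \<and> big M (sigma th i x)"
proof -
  obtain a b c where x: "x = (a,b,c)" by (cases x) auto
  have M1: "M \<ge> 3 + norm (th 1)" "M \<ge> 3 + norm (th 2)" "M \<ge> 3 + norm (th 3)" using assms(4) by auto
  show ?thesis
  proof -
    consider "i = 1" | "i = 2" | "i = 3" using assms(1) by auto
    then show ?thesis
    proof cases
      case 1
      have "norm (th 1 - a - b * c) > max (norm b) (norm c)"
        using assms(2,3) M1 by (intro cplx_step) (auto simp: x big_def UU_def 1)
      then show ?thesis using assms(2) by (auto simp: x big_def UU_def 1 sigma_def)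
    next
      case 2
      have "norm (th 2 - b - a * c) > max (norm a) (norm c)"
        using assms(2,3) M1 by (intro cplx_step) (auto simp: x big_def UU_def 2)
      then show ?thesis using assms(2) by (auto simp: x big_def UU_def 2 sigma_def)
    next
      case 3
      have "norm (th 3 - c - a * b) > max (norm a) (norm b)"
        using assms(2,3) M1 by (intro cplx_step) (auto simp: x big_def UU_def 3)
      then show ?thesis using assms(2) by (auto simp: x big_def UU_def 3 sigma_def)
    qed
  qed
qed

fun rw :: "nat list \<Rightarrow> bool" where
  "rw [] = True"
| "rw [a] = (a \<in> {1,2,3})"
| "rw (a # b # xs) = (a \<in> {1,2,3} \<and> a \<noteq> b \<and> rw (b # xs))"

lemma rw_eq: "reduced_word xs = rw xs"
proof (induction xs rule: rw.induct)
  case 1 then show ?case by (simp add: reduced_word_def)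
next
  case (2 a) then show ?case by (simp add: reduced_word_def)
next
  case (3 a b xs)
  have "(\<forall>n. Suc n < length (a # b # xs) \<longrightarrow> (a # b # xs) ! n \<noteq> (a # b # xs) ! Suc n)
     \<longleftrightarrow> a \<noteq> b \<and> (\<forall>n. Suc n < length (b # xs) \<longrightarrow> (b # xs) ! n \<noteq> (b # xs) ! Suc n)"
  proof
    assume h: "\<forall>n. Suc n < length (a # b # xs) \<longrightarrow> (a # b # xs) ! n \<noteq> (a # b # xs) ! Suc n"
    show "a \<noteq> b \<and> (\<forall>n. Suc n < length (b # xs) \<longrightarrow> (b # xs) ! n \<noteq> (b # xs) ! Suc n)"
    proof
      show "a \<noteq> b" using h[rule_format, of 0] by simp
      show "\<forall>n. Suc n < length (b # xs) \<longrightarrow> (b # xs) ! n \<noteq> (b # xs) ! Suc n"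
      proof (intro allI impI)
        fix n assume "Suc n < length (b # xs)"
        then show "(b # xs) ! n \<noteq> (b # xs) ! Suc n" using h[rule_format, of "Suc n"] by simp
      qed
    qed
  next
    assume h: "a \<noteq> b \<and> (\<forall>n. Suc n < length (b # xs) \<longrightarrow> (b # xs) ! n \<noteq> (b # xs) ! Suc n)"
    show "\<forall>n. Suc n < length (a # b # xs) \<longrightarrow> (a # b # xs) ! n \<noteq> (a # b # xs) ! Suc n"
    proof (intro allI impI)
      fix n assume n: "Suc n < length (a # b # xs)"
      show "(a # b # xs) ! n \<noteq> (a # b # xs) ! Suc n"
      proof (cases n)
        case 0 then show ?thesis using h by simp
      next
        case (Suc m) then show ?thesis using h n by auto
      qed
    qed
  qed
  then show ?case using 3 by (auto simp: reduced_word_def)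
qed

lemma rw_tl: "rw (a # xs) \<Longrightarrow> rw xs"
  by (cases xs) auto

lemma rw_append: "rw (p @ w) \<Longrightarrow> rw w"
  by (induction p) (auto dest: rw_tl)

lemma rw_set: "rw w \<Longrightarrow> set w \<subseteq> {1,2,3}"
  by (induction w rule: rw.induct) auto

lemma word_map_Cons: "word_map th (i # w) = sigma th i \<circ> word_map th w"
  by (simp add: word_map_def)

lemma word_map_append: "word_map th (p @ w) = word_map th p \<circ> word_map th w"
  by (induction p) (auto simp: word_map_def)

lemma sigma_invol: "sigma th i (sigma th i x) = x"
  by (cases x) (auto simp: sigma_def)

lemma inj_word_map: "inj (word_map th p)"
proof (induction p)
  case Nil then show ?case by (simp add: word_map_def)
next
  case (Cons i p)
  have "inj (sigma th i)" by (metis injI sigma_invol)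
  then show ?case using Cons unfolding word_map_Cons by (metis inj_compose)
qed

lemma pingpong:
  assumes "rw w" "w \<noteq> []" "big M x" "\<not> UU (last w) x"
    "\<And>j. j \<in> {1,2,3::nat} \<Longrightarrow> M \<ge> 3 + norm (th j)"
  shows "UU (hd w) (word_map th w x) \<and> big M (word_map th w x)"
  using assms(1,2,4)
proof (induction w rule: rw.induct)
  case 1 then show ?case by simp
next
  case (2 a) then show ?case using step[OF _ assms(3) _ assms(5)] by (simp add: word_map_def)
next
  case (3 a b xs)
  have ih: "UU b (word_map th (b # xs) x) \<and> big M (word_map th (b # xs) x)"
    using 3 by simp
  have nU: "\<not> UU a (word_map th (b # xs) x)"
    using ih 3(2) rw_set[OF 3(2)] by (cases "word_map th (b # xs) x") (auto simp: UU_def)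
  show ?case using step[OF _ conjunct2[OF ih] nU assms(5)] 3(2) by (simp add: word_map_Cons)
qed

lemma quad_root:
  fixes B C :: complex
  shows "\<exists>r. r^2 + B * r + C = 0 \<and> norm B / 2 \<le> norm r"
proof -
  define s where "s = csqrt (B^2 - 4*C)"
  have s2: "s^2 = B^2 - 4*C" by (simp add: s_def)
  define r1 where "r1 = (-B + s)/2"
  define r2 where "r2 = (-B - s)/2"
  have e1: "r1^2 + B * r1 + C = 0" unfolding r1_def using s2
    by (simp add: field_simps power2_eq_square; algebra)
  have e2: "r2^2 + B * r2 + C = 0" unfolding r2_def using s2
    by (simp add: field_simps power2_eq_square; algebra)
  have "norm B = norm (r1 + r2)" by (simp add: r1_def r2_def field_simps)
  also have "\<dots> \<le> norm r1 + norm r2" by (rule norm_triangle_ineq)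
  finally have "norm B / 2 \<le> norm r1 \<or> norm B / 2 \<le> norm r2" by linarith
  then show ?thesis using e1 e2 by blast
qed

lemma bigroot:
  fixes th r :: complex and M :: real
  assumes "M \<ge> 3" "norm ((of_real (M + norm th))^2 - th) / 2 \<le> norm r"
  shows "norm r > M + norm th"
proof -
  define tt where "tt = M + norm th"
  have f1: "norm ((of_real tt :: complex)^2) \<le> norm ((of_real tt)^2 - th) + norm th"
    using norm_triangle_ineq2[of "(of_real tt :: complex)^2" th] by simp
  have t3: "tt \<ge> 3" unfolding tt_def using assms(1) norm_ge_zero[of th] by linarith
  have f2a: "norm ((of_real tt :: complex)^2) = \<bar>tt\<bar>^2" by (simp only: norm_power norm_of_real)
  have f2: "norm ((of_real tt :: complex)^2) = tt * tt" using t3 f2a by (simp add: power2_eq_square)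
  have f3: "tt * (tt - 2) \<ge> tt * 1" using t3 by (intro mult_left_mono) auto
  have f4: "tt * (tt - 2) = tt * tt - 2 * tt" by (simp add: algebra_simps)
  have f5: "tt > norm th" using assms(1) by (simp add: tt_def)
  have f6: "norm ((of_real tt :: complex)^2 - th) / 2 \<le> norm r" using assms(2) by (simp add: tt_def)
  from f1 f2 f3 f4 f5 f6 have "tt < norm r" by linarith
  then show ?thesis by (simp add: tt_def)
qed

lemma point3:
  assumes "M \<ge> 3"
  shows "\<exists>x \<in> affine_surface th. big M x \<and> UU 3 x"
proof -
  define t where "t = (of_real (M + norm (th 3)) :: complex)"
  obtain r where r: "r^2 + (t^2 - th 3) * r + (2*t^2 - (th 1 + th 2) * t + th 4) = 0"
    "norm (t^2 - th 3) / 2 \<le> norm r" using quad_root by blast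
  have nr: "norm r > M + norm (th 3)" using bigroot[OF assms] r(2) by (simp add: t_def)
  have nt: "norm t = M + norm (th 3)" using assms unfolding t_def by (simp only: norm_of_real) simp
  have "(t, t, r) \<in> affine_surface th" using r(1) unfolding affine_surface_def
    by (simp add: algebra_simps power2_eq_square)
  moreover have "M \<le> norm r" using nr norm_ge_zero[of "th 3"] by linarith
  moreover have "big M (t,t,r) \<and> UU 3 (t,t,r)" using nr nt calculation by (simp add: big_def UU_def)
  ultimately show ?thesis by blast
qed

lemma point1:
  assumes "M \<ge> 3"
  shows "\<exists>x \<in> affine_surface th. big M x \<and> UU 1 x"
proof -
  define t where "t = (of_real (M + norm (th 1)) :: complex)"
  obtain r where r: "r^2 + (t^2 - th 1) * r + (2*t^2 - (th 2 + th 3) * t + th 4) = 0"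
    "norm (t^2 - th 1) / 2 \<le> norm r" using quad_root by blast
  have nr: "norm r > M + norm (th 1)" using bigroot[OF assms] r(2) by (simp add: t_def)
  have nt: "norm t = M + norm (th 1)" using assms unfolding t_def by (simp only: norm_of_real) simp
  have "(r, t, t) \<in> affine_surface th" using r(1) unfolding affine_surface_def
    by (simp add: algebra_simps power2_eq_square)
  moreover have "M \<le> norm r" using nr norm_ge_zero[of "th 1"] by linarith
  moreover have "big M (r,t,t) \<and> UU 1 (r,t,t)" using nr nt calculation by (simp add: big_def UU_def)
  ultimately show ?thesis by blast
qed

lemma point2:
  assumes "M \<ge> 3"
  shows "\<exists>x \<in> affine_surface th. big M x \<and> UU 2 x"
proof -
  define t where "t = (of_real (M + norm (th 2)) :: complex)"
  obtain r where r: "r^2 + (t^2 - th 2) * r + (2*t^2 - (th 1 + th 3) * t + th 4) = 0"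
    "norm (t^2 - th 2) / 2 \<le> norm r" using quad_root by blast
  have nr: "norm r > M + norm (th 2)" using bigroot[OF assms] r(2) by (simp add: t_def)
  have nt: "norm t = M + norm (th 2)" using assms unfolding t_def by (simp only: norm_of_real) simp
  have "(t, r, t) \<in> affine_surface th" using r(1) unfolding affine_surface_def
    by (simp add: algebra_simps power2_eq_square)
  moreover have "M \<le> norm r" using nr norm_ge_zero[of "th 2"] by linarith
  moreover have "big M (t,r,t) \<and> UU 2 (t,r,t)" using nr nt calculation by (simp add: big_def UU_def)
  ultimately show ?thesis by blast
qed

lemma point:
  assumes "M \<ge> 3" "l \<in> {1,2,3::nat}"
  shows "\<exists>x \<in> affine_surface th. big M x \<and> UU l x"
  using assms point1 point2 point3 by auto

lemma common_prefix:
  "ws \<noteq> vs \<Longrightarrow> \<exists>p w v. ws = p @ w \<and> vs = p @ v \<and> w \<noteq> v \<and>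
     (w = [] \<or> v = [] \<or> hd w \<noteq> hd v)"
proof (induction ws arbitrary: vs)
  case Nil then show ?case by (intro exI[of _ "[]"] exI[of _ vs]) simp
next
  case (Cons a ws)
  show ?case
  proof (cases vs)
    case Nil then show ?thesis by (intro exI[of _ "[]"] exI[of _ "a # ws"] exI[of _ "[]"]) simp
  next
    case (Cons b vs')
    show ?thesis
    proof (cases "a = b")
      case True
      then have "ws \<noteq> vs'" using Cons.prems Cons by simp
      then obtain p w v where pw: "ws = p @ w" "vs' = p @ v" "w \<noteq> v" "w = [] \<or> v = [] \<or> hd w \<noteq> hd v"
        using Cons.IH by blast
      then show ?thesis using True Cons pw by (intro exI[of _ "a # p"] exI[of _ w] exI[of _ v]) simp
    next
      case False
      then show ?thesis using Cons by (intro exI[of _ "[]"] exI[of _ "a # ws"] exI[of _ vs]) simp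
    qed
  qed
qed

lemma UU_disj: "UU i y \<Longrightarrow> UU j y \<Longrightarrow> i \<in> {1,2,3} \<Longrightarrow> j \<in> {1,2,3} \<Longrightarrow> i = j"
  by (cases y) (auto simp: UU_def split: if_splits)

lemma avoid: "\<exists>l \<in> {1,2,3::nat}. l \<noteq> a \<and> l \<noteq> b"
  by (cases "a = 1"; cases "b = 1"; cases "a = 2"; cases "b = 2") auto

theorem theorem7p7:
  fixes k :: "nat \<Rightarrow> complex" and ws vs :: "nat list"
  assumes "in_K k" and "\<not> in_Wall k"
    and "reduced_word ws" and "reduced_word vs" and "ws \<noteq> vs"
  shows "\<exists>x \<in> affine_surface (rh k). word_map (rh k) ws x \<noteq> word_map (rh k) vs x"
proof -
  define th where "th = rh k"
  define M where "M = 3 + norm (th 1) + norm (th 2) + norm (th 3)"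
  have M3: "M \<ge> 3" by (simp add: M_def)
  have Mj: "\<And>j. j \<in> {1,2,3::nat} \<Longrightarrow> M \<ge> 3 + norm (th j)" by (auto simp: M_def)
  obtain p w v where pwv: "ws = p @ w" "vs = p @ v" "w \<noteq> v" "w = [] \<or> v = [] \<or> hd w \<noteq> hd v"
    using common_prefix[OF assms(5)] by blast
  have rw: "rw w" "rw v" using assms(3,4) pwv rw_append by (auto simp: rw_eq)
  have main: "word_map th w x \<noteq> word_map th v x" if "w = [] \<or> v = [] \<or> hd w \<noteq> hd v"
    "w \<noteq> v" "rw w" "rw v" "x \<in> affine_surface th" "big M x" "UU l x" "l \<in> {1,2,3}"
    "w \<noteq> [] \<Longrightarrow> l \<noteq> last w" "v \<noteq> [] \<Longrightarrow> l \<noteq> last v"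
    "w = [] \<Longrightarrow> l \<noteq> hd v" "v = [] \<Longrightarrow> l \<noteq> hd w"
    for w v x l
  proof -
    have A: "UU (hd u) (word_map th u x)" if "rw u" "u \<noteq> []" "l \<noteq> last u" for u
    proof -
      have "last u \<in> {1,2,3}" using rw_set[OF that(1)] that(2) last_in_set by blast
      have "\<not> UU (last u) x"
      proof
        assume "UU (last u) x"
        from UU_disj[OF \<open>UU l x\<close> this \<open>l \<in> {1,2,3}\<close> \<open>last u \<in> {1,2,3}\<close>] that(3) show False by simp
      qed
      have "UU (hd u) (word_map th u x) \<and> big M (word_map th u x)"
        by (rule pingpong[OF that(1,2) \<open>big M x\<close> \<open>\<not> UU (last u) x\<close>]) (simp add: Mj)
      then show ?thesis by (rule conjunct1)
    qed
    have hs: "hd u \<in> {1,2,3}" if "rw u" "u \<noteq> []" for u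
      using rw_set[OF that(1)] that(2) hd_in_set by blast
    note H = that
    consider "w = []" | "v = []" | "w \<noteq> []" "v \<noteq> []" "hd w \<noteq> hd v" using H(1) by blast
    then show ?thesis
    proof cases
      case 1
      then have v: "v \<noteq> []" using that(2) by simp
      have U: "UU (hd v) (word_map th v x)" using A[OF that(4) v that(10)[OF v]] .
      have w: "word_map th w x = x" using 1 by (simp add: word_map_def)
      show ?thesis
      proof
        assume "word_map th w x = word_map th v x"
        then have "UU (hd v) x" using U w by simp
        from UU_disj[OF \<open>UU l x\<close> this \<open>l \<in> {1,2,3}\<close> hs[OF that(4) v]] that(11)[OF 1] show False by simp
      qed
    next
      case 2
      then have v: "w \<noteq> []" using that(2) by simp
      have U: "UU (hd w) (word_map th w x)" using A[OF that(3) v that(9)[OF v]] .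
      have w: "word_map th v x = x" using 2 by (simp add: word_map_def)
      show ?thesis
      proof
        assume "word_map th w x = word_map th v x"
        then have "UU (hd w) x" using U w by simp
        from UU_disj[OF \<open>UU l x\<close> this \<open>l \<in> {1,2,3}\<close> hs[OF that(3) v]] that(12)[OF 2] show False by simp
      qed
    next
      case 3
      have U1: "UU (hd w) (word_map th w x)" using A[OF that(3) 3(1) that(9)[OF 3(1)]] .
      have U2: "UU (hd v) (word_map th v x)" using A[OF that(4) 3(2) that(10)[OF 3(2)]] .
      show ?thesis
      proof
        assume "word_map th w x = word_map th v x"
        then have "UU (hd w) (word_map th v x)" using U1 by simp
        from UU_disj[OF this U2 hs[OF that(3) 3(1)] hs[OF that(4) 3(2)]] 3(3) show False by simp
      qed
    qed
  qed
  define a where "a = (if w = [] then hd v else last w)"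
  define b where "b = (if v = [] then hd w else last v)"
  obtain l where l: "l \<in> {1,2,3::nat}" "l \<noteq> a" "l \<noteq> b" using avoid by blast
  obtain x where x: "x \<in> affine_surface th" "big M x" "UU l x" using point[OF M3 l(1)] by blast
  have "word_map th w x \<noteq> word_map th v x"
  proof (rule main[OF pwv(4,3) rw x l(1)])
    show "w \<noteq> [] \<Longrightarrow> l \<noteq> last w" using l by (simp add: a_def)
    show "v \<noteq> [] \<Longrightarrow> l \<noteq> last v" using l by (simp add: b_def)
    show "w = [] \<Longrightarrow> l \<noteq> hd v" using l by (simp add: a_def)
    show "v = [] \<Longrightarrow> l \<noteq> hd w" using l by (simp add: b_def)
  qed
  then have "word_map th p (word_map th w x) \<noteq> word_map th p (word_map th v x)"
    using inj_word_map[of th p] by (auto dest: injD)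
  then show ?thesis using x(1) pwv by (auto simp: th_def word_map_append)
qed

end
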